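(* Let $\boldsymbol{M}$ be a log-convex sequence. Then: (i) $\boldsymbol{M}_{+1}\subset\widetilde{\boldsymbol{M}}$. (ii) The following statements are equivalent: (1) $\boldsymbol{M}$ satisfies $\operatorname{(sm)}$; (2) $\boldsymbol{M}_{+1}$ satisfies $\operatorname{(sm)}$; (3) $\boldsymbol{M}_{+1}\approx\widetilde{\boldsymbol{M}}$; (4) $\widetilde{\boldsymbol{M}}$ satisfies $\operatorname{(sm)}$.
   Context: $\boldsymbol{M}=(M_p)_{p\in\mathbb{N}_0}$ is a sequence of positive reals with $M_0=1$, with quotients $m_p=M_{p+1}/M_p$; log-convex means $M_p^2\le M_{p-1}M_{p+1}$ for $p\ge1$ (equivalently $(m_p)$ nondecreasing). $\boldsymbol{M}_{+1}=(M_{p+1})_p$ and $\widetilde{\boldsymbol{M}}=(\widetilde M_p)_p$ with $\widetilde M_p=M_{p+1}\log(e^2m_{p+1}/m_p)$. For any sequence $\boldsymbol{N}$ with quotients $n_p=N_{p+1}/N_p$, $\operatorname{(sm)}$ means there are $C_0>0$, $H>1$ with $\log(n_{p+1}/n_p)\le C_0H^{p+1}$ for all $p\in\mathbb{N}_0$. $\boldsymbol{N}\subset\boldsymbol{P}$ means there are $C,h>0$ with $N_p\le Ch^pP_p$ for all $p$; $\boldsymbol{N}\approx\boldsymbol{P}$ means $\boldsymbol{N}\subset\boldsymbol{P}$ and $\boldsymbol{P}\subset\boldsymbol{N}$. *)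

theory Defs
  imports Complex_Main
begin

definition quot :: "(nat \<Rightarrow> real) \<Rightarrow> nat \<Rightarrow> real" where
  "quot N p = N (Suc p) / N p"

definition weight_seq :: "(nat \<Rightarrow> real) \<Rightarrow> bool" where
  "weight_seq M \<longleftrightarrow> (\<forall>p. M p > 0) \<and> M 0 = 1"

definition log_convex :: "(nat \<Rightarrow> real) \<Rightarrow> bool" where
  "log_convex M \<longleftrightarrow> (\<forall>p\<ge>1. (M p)^2 \<le> M (p - 1) * M (p + 1))"

definition shift1 :: "(nat \<Rightarrow> real) \<Rightarrow> nat \<Rightarrow> real" where
  "shift1 M p = M (p + 1)"

definition Mtilde :: "(nat \<Rightarrow> real) \<Rightarrow> nat \<Rightarrow> real" where
  "Mtilde M p = M (p + 1) * ln (exp 2 * quot M (p + 1) / quot M p)"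

definition sm :: "(nat \<Rightarrow> real) \<Rightarrow> bool" where
  "sm N \<longleftrightarrow> (\<exists>C0 > 0. \<exists>H > 1. \<forall>p. ln (quot N (p + 1) / quot N p) \<le> C0 * H ^ (p + 1))"

definition seq_incl :: "(nat \<Rightarrow> real) \<Rightarrow> (nat \<Rightarrow> real) \<Rightarrow> bool" where
  "seq_incl N P \<longleftrightarrow> (\<exists>C > 0. \<exists>h > 0. \<forall>p. N p \<le> C * h ^ p * P p)"

definition seq_equiv :: "(nat \<Rightarrow> real) \<Rightarrow> (nat \<Rightarrow> real) \<Rightarrow> bool" where
  "seq_equiv N P \<longleftrightarrow> seq_incl N P \<and> seq_incl P N"

end

theory Submission
  imports Defs
begin

definition smA :: "(nat \<Rightarrow> real) \<Rightarrow> bool" where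
  "smA a \<longleftrightarrow> (\<exists>C0 > 0. \<exists>H > 1. \<forall>p. a p \<le> C0 * H ^ (p + 1))"

lemma smA_Suc: "smA a \<longleftrightarrow> smA (\<lambda>p. a (Suc p))"
proof
  assume "smA a"
  then obtain C H where C: "C > 0" "H > 1" "\<forall>p. a p \<le> C * H ^ (p + 1)"
    unfolding smA_def by blast
  have "a (Suc p) \<le> (C * H) * H ^ (p + 1)" for p
    using C(3)[rule_format, of "Suc p"] by (simp add: mult.assoc)
  then show "smA (\<lambda>p. a (Suc p))" unfolding smA_def
    using C by (intro exI[of _ "C*H"]) auto
next
  assume "smA (\<lambda>p. a (Suc p))"
  then obtain C H where C: "C > 0" "H > 1" "\<forall>p. a (Suc p) \<le> C * H ^ (p + 1)"
    unfolding smA_def by blast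
  define C' where "C' = max C (\<bar>a 0\<bar> + 1)"
  have "a p \<le> C' * H ^ (p + 1)" for p
  proof (cases p)
    case 0
    have "a 0 \<le> (\<bar>a 0\<bar> + 1) * 1" by simp
    also have "\<dots> \<le> C' * H" using C(2) unfolding C'_def
      by (intro mult_mono) auto
    finally show ?thesis using 0 by simp
  next
    case (Suc q)
    have "a p \<le> C * H ^ (q + 1)" using C(3) Suc by auto
    also have "\<dots> \<le> C' * H ^ (p + 1)" unfolding C'_def using C Suc
      by (intro mult_mono power_increasing) auto
    finally show ?thesis .
  qed
  moreover have "C' > 0" unfolding C'_def using C by auto
  ultimately show "smA a" unfolding smA_def using C(2) by blast
qed

lemma ln_le_quarter: assumes "(y::real) > 0" shows "ln y \<le> y / 4 + ln 4 - 1"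
proof -
  have "ln (y/4) \<le> y/4 - 1" using assms by (intro ln_le_minus_one) auto
  moreover have "ln (y/4) = ln y - ln 4" using assms by (simp add: ln_div)
  ultimately show ?thesis by simp
qed

lemma ln_two_plus: assumes "(x::real) \<ge> 0" shows "ln (2 + x) \<le> ln 2 + x / 2"
proof -
  have "ln 2 + ln (1 + x/2) = ln (2 * (1 + x/2))"
    using assms by (subst ln_mult) auto
  also have "2 * (1 + x/2) = 2 + x" by simp
  finally have "ln (2 + x) = ln 2 + ln (1 + x/2)" by simp
  moreover have "ln (1 + x/2) \<le> x/2" using assms by (intro ln_add_one_self_le_self) auto
  ultimately show ?thesis by simp
qed

theorem proposition4p14:
  fixes M :: "nat \<Rightarrow> real"
  assumes "weight_seq M" and "log_convex M"
  shows "seq_incl (shift1 M) (Mtilde M)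
         \<and> (sm M \<longleftrightarrow> sm (shift1 M)) \<and> (sm (shift1 M) \<longleftrightarrow> seq_equiv (shift1 M) (Mtilde M))
         \<and> (seq_equiv (shift1 M) (Mtilde M) \<longleftrightarrow> sm (Mtilde M))"
proof -
  have Mpos: "M p > 0" for p using assms(1) unfolding weight_seq_def by auto
  have qpos: "quot M p > 0" for p using Mpos unfolding quot_def by auto
  have qmono: "quot M p \<le> quot M (Suc p)" for p
  proof -
    have "(M (Suc p))^2 \<le> M p * M (Suc (Suc p))"
      using assms(2) unfolding log_convex_def by (auto dest: spec[of _ "Suc p"])
    then show ?thesis using Mpos[of p] Mpos[of "Suc p"]
      by (simp add: quot_def divide_simps power2_eq_square mult.commute)
  qed
  define a where "a p = ln (quot M (p+1) / quot M p)" for p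
  have ratio_ge: "quot M (p+1) / quot M p \<ge> 1" for p
    using qmono[of p] qpos[of p] by simp
  have a_nn: "a p \<ge> 0" for p unfolding a_def using ratio_ge[of p] by simp
  have a_exp: "quot M (p+1) / quot M p = exp (a p)" for p
    unfolding a_def using ratio_ge[of p] by simp
  have Mt: "Mtilde M p = M (p+1) * (2 + a p)" for p
  proof -
    have "ln (exp 2 * quot M (p + 1) / quot M p) = ln (exp 2 * (quot M (p + 1) / quot M p))"
      by simp
    also have "\<dots> = 2 + a p" unfolding a_def using ratio_ge[of p]
      by (subst ln_mult) auto
    finally show ?thesis unfolding Mtilde_def by simp
  qed
  have smM: "sm M \<longleftrightarrow> smA a" unfolding sm_def smA_def a_def by simp
  have qs: "quot (shift1 M) p = quot M (Suc p)" for p by (simp add: quot_def shift1_def)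
  have smS: "sm (shift1 M) \<longleftrightarrow> smA (\<lambda>p. a (Suc p))"
    unfolding sm_def smA_def a_def qs by simp
  have incl: "seq_incl (shift1 M) (Mtilde M)"
  proof -
    have "\<forall>p. shift1 M p \<le> 1 / 2 * 1 ^ p * Mtilde M p"
    proof
      fix p
      show "shift1 M p \<le> 1 / 2 * 1 ^ p * Mtilde M p"
        unfolding Mt shift1_def using Mpos[of "p+1"] a_nn[of p]
        by (simp add: algebra_simps)
    qed
    then show ?thesis unfolding seq_incl_def
      by (intro exI[of _ "1/2"] conjI exI[of _ "1::real"]) auto
  qed
  have eqv: "seq_equiv (shift1 M) (Mtilde M) \<longleftrightarrow> smA a"
  proof -
    have "seq_equiv (shift1 M) (Mtilde M) \<longleftrightarrow> (\<exists>C>0. \<exists>h>0. \<forall>p. 2 + a p \<le> C * h ^ p)"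
    proof -
      have "Mtilde M p \<le> C * h ^ p * shift1 M p \<longleftrightarrow> 2 + a p \<le> C * h ^ p" for C h p
        unfolding Mt shift1_def using Mpos[of "p+1"]
        by (simp add: mult.commute mult.left_commute)
      then show ?thesis unfolding seq_equiv_def seq_incl_def using incl
        unfolding seq_incl_def by simp
    qed
    also have "\<dots> \<longleftrightarrow> smA a"
    proof
      assume "\<exists>C>0. \<exists>h>0. \<forall>p. 2 + a p \<le> C * h ^ p"
      then obtain C h where C: "C > 0" "h > 0" "\<forall>p. 2 + a p \<le> C * h ^ p" by blast
      define H where "H = max h 2"
      have "a p \<le> C * H ^ (p+1)" for p
      proof -
        have "a p \<le> C * h ^ p" using C(3) a_nn[of p] by (smt (verit) a_nn)
        also have "\<dots> \<le> C * H ^ p" unfolding H_def using C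
          by (intro mult_left_mono power_mono) auto
        also have "\<dots> \<le> C * H ^ (p+1)" unfolding H_def using C
          by (intro mult_left_mono power_increasing) auto
        finally show ?thesis .
      qed
      then show "smA a" unfolding smA_def using C(1) by (intro exI[of _ C] conjI exI[of _ H]) (auto simp: H_def)
    next
      assume "smA a"
      then obtain C H where C: "C > 0" "H > 1" "\<forall>p. a p \<le> C * H ^ (p + 1)"
        unfolding smA_def by blast
      have "2 + a p \<le> (2 + C * H) * H ^ p" for p
      proof -
        have "(1::real) \<le> H ^ p" using C(2) by simp
        then have "2 + a p \<le> 2 * H^p + C * H * H ^ p" using C(3)[rule_format, of p]
          by (simp add: mult.assoc)
        then show ?thesis by (simp add: algebra_simps)
      qed
      moreover have "0 < 2 + C * H" "0 < H" using C(1,2) by (auto intro: add_pos_pos)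
      ultimately show "\<exists>C>0. \<exists>h>0. \<forall>p. 2 + a p \<le> C * h ^ p" by blast
    qed
    finally show ?thesis .
  qed
  define u where "u p = 2 + a p" for p
  have upos: "u p > 0" for p unfolding u_def using a_nn[of p] by simp
  define b where "b p = a (p+1) + ln (u (p+2)) + ln (u p) - 2 * ln (u (p+1))" for p
  have qMt: "quot (Mtilde M) p = quot M (p+1) * u (p+1) / u p" for p
    unfolding quot_def Mt u_def[symmetric] using Mpos[of "p+1"] Mpos[of "p+2"] upos[of p]
    by (simp add: field_simps)
  have smT: "sm (Mtilde M) \<longleftrightarrow> smA b"
  proof -
    have "ln (quot (Mtilde M) (p+1) / quot (Mtilde M) p) = b p" for p
    proof -
      have "quot (Mtilde M) (p+1) / quot (Mtilde M) p
            = (quot M (p+2) / quot M (p+1)) * (u (p+2) * u p / (u (p+1))^2)"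
        unfolding qMt using qpos[of "p+1"] qpos[of "p+2"] upos[of p] upos[of "p+1"] upos[of "p+2"]
        by (simp add: field_simps power2_eq_square)
      also have "\<dots> = exp (a (p+1)) * (u (p+2) * u p / (u (p+1))^2)"
        using a_exp[of "p+1"] by simp
      finally have e: "quot (Mtilde M) (p+1) / quot (Mtilde M) p
            = exp (a (p+1)) * (u (p+2) * u p / (u (p+1))^2)" .
      show ?thesis unfolding e b_def
        using upos[of p] upos[of "p+1"] upos[of "p+2"]
        by (simp add: ln_mult ln_div ln_realpow)
    qed
    then show ?thesis unfolding sm_def smA_def by simp
  qed
  have bT: "smA b \<longleftrightarrow> smA a"
  proof
    assume "smA b"
    then obtain C H where C: "C > 0" "H > 1" "\<forall>p. b p \<le> C * H ^ (p + 1)"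
      unfolding smA_def by blast
    have l4: "ln (4::real) > 0" by simp
    have "a (Suc p) \<le> (2*C + 4 * ln 4) * H ^ (p+1)" for p
    proof -
      have h1: "ln (u (p+2)) \<ge> 0" "ln (u p) \<ge> 0"
        unfolding u_def using a_nn[of p] a_nn[of "p+2"] by auto
      have h2: "ln (u (p+1)) \<le> u (p+1) / 4 + ln 4 - 1" using ln_le_quarter upos by blast
      have "a (p+1) / 2 \<le> C * H ^ (p + 1) + 2 * ln 4"
        using C(3)[rule_format, of p] h1 h2 unfolding b_def u_def by argo
      also have "\<dots> \<le> C * H ^ (p + 1) + 2 * ln 4 * H^(p+1)"
      proof -
        have "(1::real) \<le> H^(p+1)" using C(2) by (intro one_le_power) auto
        then show ?thesis using l4 by simp
      qed
      finally show ?thesis by (simp add: algebra_simps)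
    qed
    then have "smA (\<lambda>p. a (Suc p))" unfolding smA_def using C l4
      by (intro exI[of _ "2*C + 4 * ln 4"] conjI exI[of _ H]) (auto intro: add_pos_pos)
    then show "smA a" using smA_Suc by blast
  next
    assume "smA a"
    then obtain C H where C: "C > 0" "H > 1" "\<forall>p. a p \<le> C * H ^ (p + 1)"
      unfolding smA_def by blast
    have "b p \<le> (2 * C * H^2) * H ^ (p + 1)" for p
    proof -
      have l2: "ln (u q) \<le> ln 2 + a q / 2" "ln (u q) \<ge> ln 2" for q
        unfolding u_def using ln_two_plus a_nn[of q] by auto
      have "b p \<le> a (p+1) + a (p+2) / 2 + a p / 2"
        unfolding b_def using l2[of p] l2[of "p+1"] l2[of "p+2"] by simp
      also have "\<dots> \<le> C * H^(p+2) + C * H^(p+3) / 2 + C * H^(p+1) / 2"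
        using C(3)[rule_format, of p] C(3)[rule_format, of "p+1"] C(3)[rule_format, of "p+2"]
        by (simp add: numeral_3_eq_3 numeral_2_eq_2)
      also have "\<dots> = C * H^(p+1) * (H + H^2/2 + 1/2)"
        by (simp add: algebra_simps power_add power2_eq_square eval_nat_numeral)
      also have "\<dots> \<le> C * H^(p+1) * (2 * H^2)"
      proof -
        have "H * 1 \<le> H * H" using C(2) by (intro mult_left_mono) auto
        then have "H \<le> H^2" "1 \<le> H^2" using C(2) by (simp_all add: power2_eq_square, linarith)
        then have "H + H^2/2 + 1/2 \<le> 2 * H^2" by simp
        then show ?thesis using C by (intro mult_left_mono) auto
      qed
      finally show ?thesis by (simp add: algebra_simps)
    qed
    then show "smA b" unfolding smA_def using C
      by (intro exI[of _ "2 * C * H^2"] conjI exI[of _ H]) auto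
  qed
  show ?thesis using incl smM smS smA_Suc[of a] eqv smT bT by blast
qed

end
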